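(* Let $(\mathbf{M}_i)_{i\in I}$ be a family of $L$-structures with an emerging metric along an ultrafilter $\mathcal{D}$ on $I$, with local ultraproduct $\mathbf{M}_{\mathrm{loc}}$. Let $\sigma(\bar x)$ be a formula (in the sense of general real-valued structures) in the vocabulary $L^+$ all of whose quantifiers are restricted to sorts $S_m$, and for each $i\in I$ let $\bar a(i)$ be a tuple of parameters in $M_i$, all lying in $S_{m_0}(M_i)$ for a fixed $m_0\in\mathbb{N}$. Let $\bar a=\mathsf{lm}^{\mathrm{loc}}([\bar a(i)]_{\mathcal{D}})\in\mathbf{M}_{\mathrm{loc}}$. Then $$\lim_{\mathcal{D}}\ \sigma^{\mathbf{M}_i}(\bar a(i))=\sigma^{\mathbf{M}_{\mathrm{loc}}}(\bar a),$$ where $\lim_{\mathcal{D}}$ is the limit of real numbers along the ultrafilter $\mathcal{D}$.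
   Context: Emerging metric: each $M_i$ carries subsets $S_m(M_i)$, $m\in\mathbb{N}$, with $S_m(M_i)\subseteq S_{m+1}(M_i)$, $\bigcup_m S_m(M_i)=M_i$, and a distance function $\mathsf{d}_i:M_i^2\to\mathbb{R}_{\ge0}$; in the first-order ultraproduct ${}^*\mathbf{M}=\prod_{\mathcal{D}}\mathbf{M}_i$, with $S_m({}^*M)=\prod_{\mathcal{D}}S_m(M_i)$ and induced hyperreal-valued $\mathsf{d}$, one requires: (1) the triangle inequality; (2) for each $n$-ary function symbol $f$ and $m$ some $k$ with $f(S_m({}^*M)^n)\subseteq S_k({}^*M)$; (3) $\mathsf{d}(x,y)\le m$ on $S_m({}^*M)$; (4) for each $f$, $m$, real $\epsilon>0$ a real $\delta>0$ with $\mathsf{d}(f(\bar x),f(\bar y))<\epsilon$ whenever $\bar x,\bar y\in S_m({}^*M)^n$, $\mathsf{d}(x_j,y_j)<\delta$ for all $j$; (5) for each relation symbol $P$, $m$, and $\bar x^0\in S_m({}^*M)^n\setminus P$ a real $\delta>0$ such that $\bar x\notin P$ whenever $\mathsf{d}(x^0_j,x_j)<\delta$ for all $j$. The local part ${}^*\mathbf{M}_{\mathrm{loc}}$ has universe $\bigcup_{m\in\mathbb{N}}S_m({}^*M)$; $x\approx y$ iff $\mathsf{d}(x,y)\le1/n$ for all $n\in\mathbb{N}$; $\mathbf{M}_{\mathrm{loc}}={}^*\mathbf{M}_{\mathrm{loc}}/\!\approx$ with induced functions, relations interpreted as images, $S_m$ interpreted as the image of $S_m({}^*M)$, and metric $\mathrm{st}\,\mathsf{d}$;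 $\mathsf{lm}^{\mathrm{loc}}$ is the quotient map. The vocabulary $L^+$ is $L$ without equality together with the distance symbol $\mathsf{d}$ and unary predicates $S_m$. Formulas are those of general (real-valued) structures: atomic formulas are $\mathsf{d}(t_1,t_2)$ and $P(\bar t)$ (a relation taking truth value $0$ if it holds and $1$ otherwise), connectives are arbitrary continuous real functions of finitely many arguments, quantifiers are $\sup_x$ and $\inf_x$ (here restricted to $x\in S_m$), and the truth value $\sigma^{\mathbf{N}}(\bar a)$ in a structure $\mathbf{N}$ is defined by induction on the formula, with $\mathsf{d}$ interpreted as $\mathsf{d}_i$ in $\mathbf{M}_i$ and as the metric in $\mathbf{M}_{\mathrm{loc}}$. *)

theory Defs
  imports Complex_Main
begin

datatype 'f trm = Var nat | App 'f "'f trm list"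

text \<open>Formulas of general (real-valued) structures in L+ (L without equality, plus d and S_m):
  atomic d(t1,t2) and P(ts); connectives = continuous real functions of finitely many
  arguments; quantifiers sup/inf over x restricted to a sort S_m:
  FSup m x phi is sup over x in S_m of phi.\<close>

datatype ('f, 'p) fml =
    FDist "'f trm" "'f trm"
  | FRel 'p "'f trm list"
  | FConn "real list \<Rightarrow> real" "('f, 'p) fml list"
  | FSup nat nat "('f, 'p) fml"
  | FInf nat nat "('f, 'p) fml"

definition cont_conn :: "nat \<Rightarrow> (real list \<Rightarrow> real) \<Rightarrow> bool" where
  "cont_conn n c \<longleftrightarrow> (\<forall>y. length y = n \<longrightarrow> (\<forall>e>0. \<exists>\<delta>>0. \<forall>x. length x = n \<and>
      (\<forall>j<n. \<bar>x ! j - y ! j\<bar> < \<delta>) \<longrightarrow> \<bar>c x - c y\<bar> < e))"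

fun wf_trm :: "('f \<Rightarrow> nat) \<Rightarrow> 'f trm \<Rightarrow> bool" where
  "wf_trm arf (Var v) = True"
| "wf_trm arf (App f ts) = (length ts = arf f \<and> (\<forall>t\<in>set ts. wf_trm arf t))"

fun wf_fml :: "('f \<Rightarrow> nat) \<Rightarrow> ('p \<Rightarrow> nat) \<Rightarrow> ('f, 'p) fml \<Rightarrow> bool" where
  "wf_fml arf arp (FDist t1 t2) = (wf_trm arf t1 \<and> wf_trm arf t2)"
| "wf_fml arf arp (FRel P ts) = (length ts = arp P \<and> (\<forall>t\<in>set ts. wf_trm arf t))"
| "wf_fml arf arp (FConn c fs) = (cont_conn (length fs) c \<and> (\<forall>g\<in>set fs. wf_fml arf arp g))"
| "wf_fml arf arp (FSup m x g) = wf_fml arf arp g"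
| "wf_fml arf arp (FInf m x g) = wf_fml arf arp g"

fun fv_trm :: "'f trm \<Rightarrow> nat set" where
  "fv_trm (Var v) = {v}"
| "fv_trm (App f ts) = (\<Union>t\<in>set ts. fv_trm t)"

fun fv :: "('f, 'p) fml \<Rightarrow> nat set" where
  "fv (FDist t1 t2) = fv_trm t1 \<union> fv_trm t2"
| "fv (FRel P ts) = (\<Union>t\<in>set ts. fv_trm t)"
| "fv (FConn c fs) = (\<Union>g\<in>set fs. fv g)"
| "fv (FSup m x g) = fv g - {x}"
| "fv (FInf m x g) = fv g - {x}"

text \<open>An L+-structure on (a subset of) the type 'a: interpretations of function symbols,
  relation symbols, the sorts S_m and the distance d.  Its universe is the union of the S_m.\<close>

record ('f, 'p, 'a) mstruct =
  Fn  :: "'f \<Rightarrow> 'a list \<Rightarrow> 'a"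
  Rel :: "'p \<Rightarrow> 'a list \<Rightarrow> bool"
  Srt :: "nat \<Rightarrow> 'a set"
  Dst :: "'a \<Rightarrow> 'a \<Rightarrow> real"

definition univ :: "('f, 'p, 'a, 'z) mstruct_scheme \<Rightarrow> 'a set" where
  "univ M = (\<Union>m. Srt M m)"

fun teval :: "('f, 'p, 'a, 'z) mstruct_scheme \<Rightarrow> (nat \<Rightarrow> 'a) \<Rightarrow> 'f trm \<Rightarrow> 'a" where
  "teval M env (Var v) = env v"
| "teval M env (App f ts) = Fn M f (map (teval M env) ts)"

text \<open>Truth values: a relation takes value 0 if it holds and 1 otherwise.\<close>
fun eval :: "('f, 'p, 'a, 'z) mstruct_scheme \<Rightarrow> (nat \<Rightarrow> 'a) \<Rightarrow> ('f, 'p) fml \<Rightarrow> real" where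
  "eval M env (FDist t1 t2) = Dst M (teval M env t1) (teval M env t2)"
| "eval M env (FRel P ts) = (if Rel M P (map (teval M env) ts) then 0 else 1)"
| "eval M env (FConn c fs) = c (map (eval M env) fs)"
| "eval M env (FSup m x g) = (SUP a\<in>Srt M m. eval M (env(x := a)) g)"
| "eval M env (FInf m x g) = (INF a\<in>Srt M m. eval M (env(x := a)) g)"

definition ultrafilter_filter :: "'i filter \<Rightarrow> bool" where
  "ultrafilter_filter D \<longleftrightarrow> D \<noteq> bot \<and> (\<forall>P. eventually P D \<or> eventually (\<lambda>i. \<not> P i) D)"

text \<open>Elements of the ultraproduct *M are represented by sequences x : 'i \<Rightarrow> 'a with
  x i \<in> M_i for D-almost all i (modulo D-almost-everywhere equality).  Atomic statements
  in *M (membership in S_m(*M), relations, and comparisons of the hyperreal d with reals)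
  hold iff they hold for D-almost all coordinates.\<close>

definition in_ult :: "('i \<Rightarrow> ('f, 'p, 'a) mstruct) \<Rightarrow> 'i filter \<Rightarrow> ('i \<Rightarrow> 'a) \<Rightarrow> bool" where
  "in_ult M D x \<longleftrightarrow> eventually (\<lambda>i. x i \<in> univ (M i)) D"

definition in_S :: "('i \<Rightarrow> ('f, 'p, 'a) mstruct) \<Rightarrow> 'i filter \<Rightarrow> nat \<Rightarrow> ('i \<Rightarrow> 'a) \<Rightarrow> bool" where
  "in_S M D m x \<longleftrightarrow> eventually (\<lambda>i. x i \<in> Srt (M i) m) D"

definition app_seq :: "('i \<Rightarrow> ('f, 'p, 'a) mstruct) \<Rightarrow> 'f \<Rightarrow> ('i \<Rightarrow> 'a) list \<Rightarrow> 'i \<Rightarrow> 'a" where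
  "app_seq M f xs = (\<lambda>i. Fn (M i) f (map (\<lambda>x. x i) xs))"

definition rel_seq :: "('i \<Rightarrow> ('f, 'p, 'a) mstruct) \<Rightarrow> 'i filter \<Rightarrow> 'p \<Rightarrow> ('i \<Rightarrow> 'a) list \<Rightarrow> bool" where
  "rel_seq M D P xs \<longleftrightarrow> eventually (\<lambda>i. Rel (M i) P (map (\<lambda>x. x i) xs)) D"

definition lstruct :: "('f \<Rightarrow> nat) \<Rightarrow> ('f, 'p, 'a) mstruct \<Rightarrow> bool" where
  "lstruct arf N \<longleftrightarrow> (\<forall>m. Srt N m \<subseteq> Srt N (Suc m))
     \<and> (\<forall>x\<in>univ N. \<forall>y\<in>univ N. Dst N x y \<ge> 0)
     \<and> (\<forall>f xs. length xs = arf f \<and> set xs \<subseteq> univ N \<longrightarrow> Fn N f xs \<in> univ N)"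

definition emerging_metric :: "('f \<Rightarrow> nat) \<Rightarrow> ('p \<Rightarrow> nat) \<Rightarrow> ('i \<Rightarrow> ('f, 'p, 'a) mstruct)
    \<Rightarrow> 'i filter \<Rightarrow> bool" where
  "emerging_metric arf arp M D \<longleftrightarrow>
     (\<forall>i. lstruct arf (M i))
     \<comment> \<open>(1) d is a pseudometric on *M (in particular the triangle inequality)\<close>
   \<and> (\<forall>x. in_ult M D x \<longrightarrow> eventually (\<lambda>i. Dst (M i) (x i) (x i) = 0) D)
   \<and> (\<forall>x y. in_ult M D x \<and> in_ult M D y \<longrightarrow>
        eventually (\<lambda>i. Dst (M i) (x i) (y i) = Dst (M i) (y i) (x i)) D)
   \<and> (\<forall>x y z. in_ult M D x \<and> in_ult M D y \<and> in_ult M D z \<longrightarrow>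
        eventually (\<lambda>i. Dst (M i) (x i) (z i) \<le> Dst (M i) (x i) (y i) + Dst (M i) (y i) (z i)) D)
     \<comment> \<open>(2)\<close>
   \<and> (\<forall>f m. \<exists>k. \<forall>xs. length xs = arf f \<and> (\<forall>x\<in>set xs. in_S M D m x) \<longrightarrow>
        in_S M D k (app_seq M f xs))
     \<comment> \<open>(3)\<close>
   \<and> (\<forall>m x y. in_S M D m x \<and> in_S M D m y \<longrightarrow>
        eventually (\<lambda>i. Dst (M i) (x i) (y i) \<le> real m) D)
     \<comment> \<open>(4)\<close>
   \<and> (\<forall>f m \<epsilon>. \<epsilon> > 0 \<longrightarrow> (\<exists>\<delta>>0. \<forall>xs ys. length xs = arf f \<and> length ys = arf f
        \<and> (\<forall>x\<in>set xs. in_S M D m x) \<and> (\<forall>y\<in>set ys. in_S M D m y)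
        \<and> (\<forall>j<arf f. eventually (\<lambda>i. Dst (M i) ((xs ! j) i) ((ys ! j) i) < \<delta>) D) \<longrightarrow>
        eventually (\<lambda>i. Dst (M i) (app_seq M f xs i) (app_seq M f ys i) < \<epsilon>) D))
     \<comment> \<open>(5)\<close>
   \<and> (\<forall>P m xs0. length xs0 = arp P \<and> (\<forall>x\<in>set xs0. in_S M D m x) \<and> \<not> rel_seq M D P xs0 \<longrightarrow>
        (\<exists>\<delta>>0. \<forall>xs. length xs = arp P \<and> (\<forall>x\<in>set xs. in_ult M D x)
           \<and> (\<forall>j<arp P. eventually (\<lambda>i. Dst (M i) ((xs0 ! j) i) ((xs ! j) i) < \<delta>) D) \<longrightarrow>
           \<not> rel_seq M D P xs))"

definition is_local :: "('i \<Rightarrow> ('f, 'p, 'a) mstruct) \<Rightarrow> 'i filter \<Rightarrow> ('i \<Rightarrow> 'a) \<Rightarrow> bool" where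
  "is_local M D x \<longleftrightarrow> (\<exists>m. in_S M D m x)"

definition inf_close :: "('i \<Rightarrow> ('f, 'p, 'a) mstruct) \<Rightarrow> 'i filter \<Rightarrow> ('i \<Rightarrow> 'a) \<Rightarrow> ('i \<Rightarrow> 'a) \<Rightarrow> bool" where
  "inf_close M D x y \<longleftrightarrow> (\<forall>n::nat. eventually (\<lambda>i. Dst (M i) (x i) (y i) \<le> 1 / real (Suc n)) D)"

definition lm_loc :: "('i \<Rightarrow> ('f, 'p, 'a) mstruct) \<Rightarrow> 'i filter \<Rightarrow> ('i \<Rightarrow> 'a) \<Rightarrow> ('i \<Rightarrow> 'a) set" where
  "lm_loc M D x = {y. is_local M D y \<and> inf_close M D x y}"

definition rep :: "('i \<Rightarrow> 'a) set \<Rightarrow> 'i \<Rightarrow> 'a" where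
  "rep c = (SOME x. x \<in> c)"

text \<open>M_loc: functions induced on classes, relations interpreted as images, S_m as image of
  S_m(*M), distance the standard part of d (= the D-limit of the coordinate distances).\<close>
definition Mloc :: "('i \<Rightarrow> ('f, 'p, 'a) mstruct) \<Rightarrow> 'i filter \<Rightarrow> ('f, 'p, ('i \<Rightarrow> 'a) set) mstruct" where
  "Mloc M D = \<lparr>
     Fn = (\<lambda>f cs. lm_loc M D (app_seq M f (map rep cs))),
     Rel = (\<lambda>P cs. \<exists>xs. length xs = length cs \<and> (\<forall>j<length cs. xs ! j \<in> cs ! j)
                        \<and> rel_seq M D P xs),
     Srt = (\<lambda>m. lm_loc M D ` {x. in_S M D m x}),
     Dst = (\<lambda>c1 c2. Lim D (\<lambda>i. Dst (M i) (rep c1 i) (rep c2 i))) \<rparr>"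

end

theory Submission
  imports Defs
begin
lemma uf_lim_exists:
  fixes f :: "'i \<Rightarrow> real"
  assumes uf: "ultrafilter_filter D" and bd: "eventually (\<lambda>i. \<bar>f i\<bar> \<le> B) D"
  shows "\<exists>L. (f \<longlongrightarrow> L) D"
proof -
  have nb: "D \<noteq> bot" using uf by (simp add: ultrafilter_filter_def)
  define T where "T = {t. eventually (\<lambda>i. t \<le> f i) D}"
  have mB: "-B \<in> T" unfolding T_def using bd by (auto elim!: eventually_mono simp: abs_le_iff)
  have ub: "t \<le> B" if "t \<in> T" for t
  proof (rule ccontr)
    assume "\<not> t \<le> B"
    have "eventually (\<lambda>i. False) D"
      using eventually_conj[OF bd that[unfolded T_def, simplified]] \<open>\<not> t \<le> B\<close>
      by (auto elim!: eventually_mono)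
    with nb show False by (simp add: eventually_False)
  qed
  have bdd: "bdd_above T" using ub by (auto simp: bdd_above_def)
  define L where "L = Sup T"
  have "(f \<longlongrightarrow> L) D"
  proof (rule order_tendstoI)
    fix a assume "a < L"
    then obtain t where "t \<in> T" "a < t" using less_cSup_iff[of T a] mB bdd L_def by blast
    then show "eventually (\<lambda>i. a < f i) D" unfolding T_def
      by (auto elim: eventually_mono)
  next
    fix a assume "L < a"
    show "eventually (\<lambda>i. f i < a) D"
    proof (rule ccontr)
      assume "\<not> eventually (\<lambda>i. f i < a) D"
      then have "eventually (\<lambda>i. \<not> f i < a) D" using uf by (auto simp: ultrafilter_filter_def)
      then have "a \<in> T" unfolding T_def by (auto elim: eventually_mono)
      then have "a \<le> L" unfolding L_def using bdd by (rule cSup_upper)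
      with \<open>L < a\<close> show False by simp
    qed
  qed
  then show ?thesis by blast
qed

lemma list_subseq:
  fixes X :: "nat \<Rightarrow> real list"
  assumes "\<forall>k. length (X k) = n \<and> (\<forall>j<n. \<bar>X k ! j\<bar> \<le> B)"
  shows "\<exists>r y. strict_mono r \<and> length y = n \<and> (\<forall>j<n. (\<lambda>k. X (r k) ! j) \<longlonglongrightarrow> y ! j)"
  using assms
proof (induction n arbitrary: X)
  case 0
  then show ?case by (auto intro: strict_mono_id[unfolded id_def])
next
  case (Suc n)
  have "\<forall>k. length (tl (X k)) = n \<and> (\<forall>j<n. \<bar>tl (X k) ! j\<bar> \<le> B)"
    using Suc.prems by (auto simp: nth_tl)
  from Suc.IH[OF this] obtain r1 y1 where r1: "strict_mono r1" "length y1 = n"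
    "\<forall>j<n. (\<lambda>k. tl (X (r1 k)) ! j) \<longlonglongrightarrow> y1 ! j" by blast
  define s where "s = (\<lambda>k. hd (X (r1 k)))"
  have hdnth: "hd (X k) = X k ! 0" for k using Suc.prems by (metis hd_conv_nth list.size(3) nat.simps(3))
  obtain r2 where r2: "strict_mono r2" "monoseq (\<lambda>k. s (r2 k))" using seq_monosub by blast
  have "Bseq (\<lambda>k. s (r2 k))" using Suc.prems
    by (intro BseqI'[where K=B]) (auto simp: s_def hdnth)
  with r2 have "convergent (\<lambda>k. s (r2 k))" by (simp add: Bseq_monoseq_convergent)
  then obtain l where l: "(\<lambda>k. s (r2 k)) \<longlonglongrightarrow> l" by (auto simp: convergent_def)
  show ?case
  proof (intro exI conjI allI impI)
    show "strict_mono (r1 \<circ> r2)" using r1 r2 by (simp add: strict_mono_o)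
    show "length (l # y1) = Suc n" using r1 by simp
    fix j assume j: "j < Suc n"
    show "(\<lambda>k. X ((r1 \<circ> r2) k) ! j) \<longlonglongrightarrow> (l # y1) ! j"
    proof (cases j)
      case 0
      then show ?thesis using l by (simp add: s_def hdnth)
    next
      case (Suc j')
      then have "j' < n" using j by simp
      then have "(\<lambda>k. tl (X (r1 k)) ! j') \<longlonglongrightarrow> y1 ! j'" using r1 by blast
      from LIMSEQ_subseq_LIMSEQ[OF this r2(1)]
      have "(\<lambda>k. tl (X (r1 (r2 k))) ! j') \<longlonglongrightarrow> y1 ! j'" by (simp add: o_def)
      moreover have "tl (X (r1 (r2 k))) ! j' = X (r1 (r2 k)) ! j" for k
      proof -
        have "length (X (r1 (r2 k))) = Suc n" using Suc.prems by blast
        then show ?thesis using \<open>j' < n\<close> Suc by (simp add: nth_tl)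
      qed
      ultimately show ?thesis using Suc by simp
    qed
  qed
qed

lemma cont_conn_bounded:
  assumes "cont_conn n c"
  shows "\<exists>K. \<forall>x. length x = n \<and> (\<forall>j<n. \<bar>x ! j\<bar> \<le> B) \<longrightarrow> \<bar>c x\<bar> \<le> K"
proof (rule ccontr)
  assume nK: "\<not> ?thesis"
  have "\<forall>k::nat. \<exists>x. length x = n \<and> (\<forall>j<n. \<bar>x ! j\<bar> \<le> B) \<and> \<bar>c x\<bar> > real k"
  proof
    fix k :: nat
    from nK have "\<not> (\<forall>x. length x = n \<and> (\<forall>j<n. \<bar>x ! j\<bar> \<le> B) \<longrightarrow> \<bar>c x\<bar> \<le> real k)"
      by blast
    then show "\<exists>x. length x = n \<and> (\<forall>j<n. \<bar>x ! j\<bar> \<le> B) \<and> \<bar>c x\<bar> > real k"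
      by (auto simp: not_le)
  qed
  from choice[OF this] obtain X where X: "\<forall>k. length (X k) = n \<and> (\<forall>j<n. \<bar>X k ! j\<bar> \<le> B) \<and> \<bar>c (X k)\<bar> > real k"
    by blast
  have "\<forall>k. length (X k) = n \<and> (\<forall>j<n. \<bar>X k ! j\<bar> \<le> B)" using X by blast
  from list_subseq[OF this] obtain r y where ry: "strict_mono r" "length y = n"
    "\<forall>j<n. (\<lambda>k. X (r k) ! j) \<longlonglongrightarrow> y ! j" by blast
  have "\<forall>e>0. \<exists>\<delta>>0. \<forall>x. length x = n \<and> (\<forall>j<n. \<bar>x ! j - y ! j\<bar> < \<delta>) \<longrightarrow> \<bar>c x - c y\<bar> < e"
    using assms ry(2) unfolding cont_conn_def by blast
  from this[rule_format, of 1] obtain \<delta> where \<delta>: "\<delta> > 0" "\<forall>x. length x = n \<and> (\<forall>j<n. \<bar>x ! j - y ! j\<bar> < \<delta>)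
      \<longrightarrow> \<bar>c x - c y\<bar> < 1"
    by auto
  have "\<forall>j\<in>{..<n}. eventually (\<lambda>k. \<bar>X (r k) ! j - y ! j\<bar> < \<delta>) sequentially"
  proof
    fix j assume "j \<in> {..<n}"
    then have "(\<lambda>k. X (r k) ! j) \<longlonglongrightarrow> y ! j" using ry(3) by simp
    then show "eventually (\<lambda>k. \<bar>X (r k) ! j - y ! j\<bar> < \<delta>) sequentially"
      using \<delta>(1) unfolding tendsto_iff dist_real_def by blast
  qed
  then have ev1: "eventually (\<lambda>k. \<forall>j\<in>{..<n}. \<bar>X (r k) ! j - y ! j\<bar> < \<delta>) sequentially"
    by (intro eventually_ball_finite) auto
  obtain N :: nat where N: "real N > \<bar>c y\<bar> + 1" using reals_Archimedean2 by blast
  have ev2: "eventually (\<lambda>k. k \<ge> N) sequentially" by (simp add: eventually_ge_at_top)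
  from eventually_happens'[OF _ eventually_conj[OF ev1 ev2]] obtain k where
    k: "\<forall>j\<in>{..<n}. \<bar>X (r k) ! j - y ! j\<bar> < \<delta>" "k \<ge> N" by auto
  have "length (X (r k)) = n" using X by blast
  then have h1: "\<bar>c (X (r k)) - c y\<bar> < 1" using \<delta>(2) k(1) by auto
  have "r k \<ge> k" using ry(1) by (simp add: strict_mono_imp_increasing)
  then have h2: "real (r k) \<ge> real N" using k(2) by simp
  have h3: "real (r k) < \<bar>c (X (r k))\<bar>" using X by blast
  show False using N h1 h2 h3 by linarith
qed

lemma finite_fv_trm: "finite (fv_trm t)"
  by (induction t) auto

lemma finite_fv: "finite (fv \<phi>)"
  by (induction \<phi>) (auto simp: finite_fv_trm)



locale em =
  fixes M :: "'i \<Rightarrow> ('f, 'p, 'a) mstruct" and D :: "'i filter"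
    and arf :: "'f \<Rightarrow> nat" and arp :: "'p \<Rightarrow> nat"
  assumes uf: "ultrafilter_filter D" and emm: "emerging_metric arf arp M D"
begin

lemma nb: "D \<noteq> bot" using uf by (simp add: ultrafilter_filter_def)
lemma ntriv: "\<not> trivial_limit D" using nb by simp

lemma ufP: "eventually P D \<or> eventually (\<lambda>i. \<not> P i) D"
  using uf by (simp add: ultrafilter_filter_def)

lemma ev_contra: "eventually P D \<Longrightarrow> eventually (\<lambda>i. \<not> P i) D \<Longrightarrow> False"
  using nb eventually_conj[of P D "\<lambda>i. \<not> P i"] by (simp add: eventually_False)

lemma not_ev: "\<not> eventually P D \<Longrightarrow> eventually (\<lambda>i. \<not> P i) D"
  using ufP by blast

lemma lst: "lstruct arf (M i)" using emm by (simp add: emerging_metric_def)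

lemma Srt_mono: "m \<le> k \<Longrightarrow> Srt (M i) m \<subseteq> Srt (M i) k"
  using lst[of i] unfolding lstruct_def by (metis lift_Suc_mono_le)

lemma Srt_univ: "Srt (M i) m \<subseteq> univ (M i)" by (auto simp: univ_def)

lemma dst_nonneg: "x \<in> univ (M i) \<Longrightarrow> y \<in> univ (M i) \<Longrightarrow> Dst (M i) x y \<ge> 0"
  using lst[of i] unfolding lstruct_def by blast

lemma self0: "in_ult M D x \<Longrightarrow> eventually (\<lambda>i. Dst (M i) (x i) (x i) = 0) D"
  using emm by (simp add: emerging_metric_def)

lemma dsym: "in_ult M D x \<Longrightarrow> in_ult M D y \<Longrightarrow>
   eventually (\<lambda>i. Dst (M i) (x i) (y i) = Dst (M i) (y i) (x i)) D"
  using emm by (simp add: emerging_metric_def)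

lemma dtri: "in_ult M D x \<Longrightarrow> in_ult M D y \<Longrightarrow> in_ult M D z \<Longrightarrow>
   eventually (\<lambda>i. Dst (M i) (x i) (z i) \<le> Dst (M i) (x i) (y i) + Dst (M i) (y i) (z i)) D"
  using emm by (simp add: emerging_metric_def)

lemma fnS: "\<exists>k. \<forall>xs. length xs = arf f \<and> (\<forall>x\<in>set xs. in_S M D m x) \<longrightarrow>
        in_S M D k (app_seq M f xs)"
  using emm by (simp add: emerging_metric_def)

lemma dbound: "in_S M D m x \<Longrightarrow> in_S M D m y \<Longrightarrow>
        eventually (\<lambda>i. Dst (M i) (x i) (y i) \<le> real m) D"
  using emm by (simp add: emerging_metric_def)

lemma fcont: "\<epsilon> > 0 \<Longrightarrow> (\<exists>\<delta>>0. \<forall>xs ys. length xs = arf f \<and> length ys = arf f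
        \<and> (\<forall>x\<in>set xs. in_S M D m x) \<and> (\<forall>y\<in>set ys. in_S M D m y)
        \<and> (\<forall>j<arf f. eventually (\<lambda>i. Dst (M i) ((xs ! j) i) ((ys ! j) i) < \<delta>) D) \<longrightarrow>
        eventually (\<lambda>i. Dst (M i) (app_seq M f xs i) (app_seq M f ys i) < \<epsilon>) D)"
  using emm unfolding emerging_metric_def by blast

lemma relopen: "length xs0 = arp P \<Longrightarrow> (\<forall>x\<in>set xs0. in_S M D m x) \<Longrightarrow> \<not> rel_seq M D P xs0 \<Longrightarrow>
        (\<exists>\<delta>>0. \<forall>xs. length xs = arp P \<and> (\<forall>x\<in>set xs. in_ult M D x)
           \<and> (\<forall>j<arp P. eventually (\<lambda>i. Dst (M i) ((xs0 ! j) i) ((xs ! j) i) < \<delta>) D) \<longrightarrow>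
           \<not> rel_seq M D P xs)"
  using emm unfolding emerging_metric_def by blast

lemma in_S_mono: assumes "in_S M D m x" "m \<le> k" shows "in_S M D k x"
  using assms(1) unfolding in_S_def by (rule eventually_mono) (use Srt_mono[OF assms(2)] in blast)

lemma in_S_ult: assumes "in_S M D m x" shows "in_ult M D x"
  using assms(1) unfolding in_S_def in_ult_def by (rule eventually_mono) (use Srt_univ in blast)

lemma local_ult: "is_local M D x \<Longrightarrow> in_ult M D x"
  unfolding is_local_def using in_S_ult by blast

lemma local_set: "finite V \<Longrightarrow> \<forall>v\<in>V. is_local M D (e v) \<Longrightarrow> \<exists>k. \<forall>v\<in>V. in_S M D k (e v)"
proof (induction V rule: finite_induct)
  case empty then show ?case by simp
next
  case (insert v V)
  then obtain k where k: "\<forall>w\<in>V. in_S M D k (e w)" by auto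
  from insert obtain m where m: "in_S M D m (e v)" by (auto simp: is_local_def)
  show ?case using k m in_S_mono
    by (intro exI[of _ "max k m"]) (metis insert_iff max.cobounded1 max.cobounded2)
qed

lemma local_list: "\<forall>x\<in>set xs. is_local M D x \<Longrightarrow> \<exists>k. \<forall>x\<in>set xs. in_S M D k x"
  using local_set[of "set xs" id] by simp

lemma in_S_ev: "finite V \<Longrightarrow> \<forall>v\<in>V. in_S M D k (e v) \<Longrightarrow>
   eventually (\<lambda>i. \<forall>v\<in>V. e v i \<in> Srt (M i) k) D"
  unfolding in_S_def by (rule eventually_ball_finite) auto

lemma fnS_pw: "\<exists>k. eventually (\<lambda>i. \<forall>xs. length xs = arf f \<and> set xs \<subseteq> Srt (M i) m
     \<longrightarrow> Fn (M i) f xs \<in> Srt (M i) k) D"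
proof -
  obtain k where k: "\<forall>xs. length xs = arf f \<and> (\<forall>x\<in>set xs. in_S M D m x) \<longrightarrow>
        in_S M D k (app_seq M f xs)" using fnS by blast
  show ?thesis
  proof (rule exI[of _ k], rule ccontr)
    let ?bad = "\<lambda>i xs. length xs = arf f \<and> set xs \<subseteq> Srt (M i) m \<and> Fn (M i) f xs \<notin> Srt (M i) k"
    assume "\<not> eventually (\<lambda>i. \<forall>xs. length xs = arf f \<and> set xs \<subseteq> Srt (M i) m
     \<longrightarrow> Fn (M i) f xs \<in> Srt (M i) k) D"
    from not_ev[OF this] have ev: "eventually (\<lambda>i. \<exists>xs. ?bad i xs) D"
      by (rule eventually_mono) blast
    define X where "X i = (SOME xs. ?bad i xs)" for i
    have evX: "eventually (\<lambda>i. ?bad i (X i)) D"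
      using ev by (rule eventually_mono) (unfold X_def, erule someI_ex)
    define xs where "xs = map (\<lambda>j i. X i ! j) [0..<arf f]"
    have "\<forall>x\<in>set xs. in_S M D m x"
    proof
      fix x assume "x \<in> set xs"
      then obtain j where j: "j < arf f" "x = (\<lambda>i. X i ! j)" unfolding xs_def by auto
      show "in_S M D m x" unfolding in_S_def j(2)
      proof (rule eventually_mono[OF evX])
        fix i assume "?bad i (X i)"
        then have "length (X i) = arf f" "set (X i) \<subseteq> Srt (M i) m" by blast+
        moreover have "X i ! j \<in> set (X i)" using j(1) \<open>length (X i) = arf f\<close> by simp
        ultimately show "X i ! j \<in> Srt (M i) m" by blast
      qed
    qed
    moreover have "length xs = arf f" unfolding xs_def by simp
    ultimately have "in_S M D k (app_seq M f xs)" using k by blast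
    moreover have "eventually (\<lambda>i. app_seq M f xs i \<notin> Srt (M i) k) D"
    proof (rule eventually_mono[OF evX])
      fix i assume b: "?bad i (X i)"
      have "map (\<lambda>x. x i) xs = map (\<lambda>j. X i ! j) [0..<arf f]" unfolding xs_def by simp
      also have "\<dots> = X i" using b map_nth[of "X i"] by simp
      finally show "app_seq M f xs i \<notin> Srt (M i) k" using b by (simp add: app_seq_def)
    qed
    ultimately show False unfolding in_S_def using ev_contra by blast
  qed
qed

lemma dbound_pw: "eventually (\<lambda>i. \<forall>x\<in>Srt (M i) m. \<forall>y\<in>Srt (M i) m. Dst (M i) x y \<le> real m) D"
proof (rule ccontr)
  let ?bad = "\<lambda>i p. fst p \<in> Srt (M i) m \<and> snd p \<in> Srt (M i) m \<and> Dst (M i) (fst p) (snd p) > real m"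
  assume "\<not> ?thesis"
  from not_ev[OF this] have ev: "eventually (\<lambda>i. \<exists>p. ?bad i p) D"
  proof (rule eventually_mono)
    fix i assume "\<not> (\<forall>x\<in>Srt (M i) m. \<forall>y\<in>Srt (M i) m. Dst (M i) x y \<le> real m)"
    then obtain x y where "x \<in> Srt (M i) m" "y \<in> Srt (M i) m" "Dst (M i) x y > real m"
      by (auto simp: not_le)
    then show "\<exists>p. ?bad i p" by (intro exI[of _ "(x,y)"]) simp
  qed
  define X where "X i = (SOME p. ?bad i p)" for i
  have evX: "eventually (\<lambda>i. ?bad i (X i)) D"
    using ev by (rule eventually_mono) (unfold X_def, erule someI_ex)
  have "in_S M D m (\<lambda>i. fst (X i))" unfolding in_S_def using evX by (rule eventually_mono) simp
  moreover have "in_S M D m (\<lambda>i. snd (X i))" unfolding in_S_def using evX by (rule eventually_mono) simp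
  ultimately have e1: "eventually (\<lambda>i. Dst (M i) (fst (X i)) (snd (X i)) \<le> real m) D" by (rule dbound)
  have e2: "eventually (\<lambda>i. \<not> Dst (M i) (fst (X i)) (snd (X i)) \<le> real m) D"
    using evX by (rule eventually_mono) auto
  from ev_contra[OF e1 e2] show False .
qed

end

context em begin

lemma inf_close_eps: "inf_close M D x y \<longleftrightarrow> (\<forall>\<epsilon>>0. eventually (\<lambda>i. Dst (M i) (x i) (y i) < \<epsilon>) D)"
proof
  assume h: "inf_close M D x y"
  show "\<forall>\<epsilon>>0. eventually (\<lambda>i. Dst (M i) (x i) (y i) < \<epsilon>) D"
  proof (intro allI impI)
    fix \<epsilon> :: real assume "\<epsilon> > 0"
    then obtain N :: nat where N: "1 / real (Suc N) < \<epsilon>" by (rule nat_approx_posE)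
    from h have "eventually (\<lambda>i. Dst (M i) (x i) (y i) \<le> 1 / real (Suc N)) D"
      unfolding inf_close_def by blast
    then show "eventually (\<lambda>i. Dst (M i) (x i) (y i) < \<epsilon>) D"
      by (rule eventually_mono) (use N in linarith)
  qed
next
  assume h: "\<forall>\<epsilon>>0. eventually (\<lambda>i. Dst (M i) (x i) (y i) < \<epsilon>) D"
  show "inf_close M D x y" unfolding inf_close_def
  proof
    fix n :: nat
    have "eventually (\<lambda>i. Dst (M i) (x i) (y i) < 1 / real (Suc n)) D" using h by simp
    then show "eventually (\<lambda>i. Dst (M i) (x i) (y i) \<le> 1 / real (Suc n)) D"
      by (rule eventually_mono) simp
  qed
qed

lemma close_refl: "in_ult M D x \<Longrightarrow> inf_close M D x x"
  unfolding inf_close_def by (auto dest!: self0 elim!: eventually_mono)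

lemma close_sym: assumes "in_ult M D x" "in_ult M D y" "inf_close M D x y" shows "inf_close M D y x"
  unfolding inf_close_eps
proof (intro allI impI)
  fix \<epsilon> :: real assume "\<epsilon> > 0"
  with assms(3) have "eventually (\<lambda>i. Dst (M i) (x i) (y i) < \<epsilon>) D" unfolding inf_close_eps by blast
  with dsym[OF assms(1,2)] show "eventually (\<lambda>i. Dst (M i) (y i) (x i) < \<epsilon>) D"
    by eventually_elim simp
qed

lemma close_trans: assumes "in_ult M D x" "in_ult M D y" "in_ult M D z"
  "inf_close M D x y" "inf_close M D y z" shows "inf_close M D x z"
  unfolding inf_close_eps
proof (intro allI impI)
  fix \<epsilon> :: real assume e: "\<epsilon> > 0"
  have e2: "\<epsilon>/2 > 0" using e by simp
  with assms(4) have 1: "eventually (\<lambda>i. Dst (M i) (x i) (y i) < \<epsilon>/2) D" unfolding inf_close_eps by blast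
  from e2 assms(5) have 2: "eventually (\<lambda>i. Dst (M i) (y i) (z i) < \<epsilon>/2) D" unfolding inf_close_eps by blast
  from 1 2 dtri[OF assms(1,2,3)] show "eventually (\<lambda>i. Dst (M i) (x i) (z i) < \<epsilon>) D"
    by eventually_elim simp
qed

lemma mem_lm_loc: "is_local M D x \<Longrightarrow> x \<in> lm_loc M D x"
  unfolding lm_loc_def using close_refl local_ult by blast

lemma rep_lm: assumes "is_local M D x" shows "rep (lm_loc M D x) \<in> lm_loc M D x"
  unfolding rep_def by (rule someI[where P="\<lambda>z. z \<in> lm_loc M D x", OF mem_lm_loc[OF assms]])

lemma rep_local: "is_local M D x \<Longrightarrow> is_local M D (rep (lm_loc M D x))"
  using rep_lm unfolding lm_loc_def by blast

lemma rep_close: "is_local M D x \<Longrightarrow> inf_close M D x (rep (lm_loc M D x))"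
  using rep_lm unfolding lm_loc_def by blast

lemma lm_loc_eq: assumes "is_local M D x" "is_local M D y" "inf_close M D x y"
  shows "lm_loc M D x = lm_loc M D y"
proof -
  have ux: "in_ult M D x" and uy: "in_ult M D y" using assms local_ult by auto
  have yx: "inf_close M D y x" using close_sym[OF ux uy assms(3)] .
  have "inf_close M D x z \<longleftrightarrow> inf_close M D y z" if "is_local M D z" for z
    using close_trans[OF uy ux local_ult[OF that] yx] close_trans[OF ux uy local_ult[OF that] assms(3)]
    by blast
  then show ?thesis unfolding lm_loc_def by blast
qed

lemma Mloc_Fn: "Fn (Mloc M D) f cs = lm_loc M D (app_seq M f (map rep cs))"
  by (simp add: Mloc_def)
lemma Mloc_Rel: "Rel (Mloc M D) P cs = (\<exists>xs. length xs = length cs \<and> (\<forall>j<length cs. xs ! j \<in> cs ! j)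
                        \<and> rel_seq M D P xs)"
  by (simp add: Mloc_def)
lemma Mloc_Srt: "Srt (Mloc M D) m = lm_loc M D ` {x. in_S M D m x}"
  by (simp add: Mloc_def)
lemma Mloc_Dst: "Dst (Mloc M D) c1 c2 = Lim D (\<lambda>i. Dst (M i) (rep c1 i) (rep c2 i))"
  by (simp add: Mloc_def)

end

context em begin

lemma trm_pw: "wf_trm arf t \<Longrightarrow> \<exists>k. eventually (\<lambda>i. \<forall>\<rho>. (\<forall>v\<in>fv_trm t. \<rho> v \<in> Srt (M i) m)
   \<longrightarrow> teval (M i) \<rho> t \<in> Srt (M i) k) D"
proof (induction t)
  case (Var v)
  show ?case by (rule exI[of _ m]) simp
next
  case (App f ts)
  have "\<forall>t\<in>set ts. \<exists>k. eventually (\<lambda>i. \<forall>\<rho>. (\<forall>v\<in>fv_trm t. \<rho> v \<in> Srt (M i) m)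
     \<longrightarrow> teval (M i) \<rho> t \<in> Srt (M i) k) D" using App by simp
  then obtain kf where kf: "\<forall>t\<in>set ts. eventually (\<lambda>i. \<forall>\<rho>. (\<forall>v\<in>fv_trm t. \<rho> v \<in> Srt (M i) m)
     \<longrightarrow> teval (M i) \<rho> t \<in> Srt (M i) (kf t)) D" by (rule bchoice[elim_format]) blast
  define K where "K = Max (insert 0 (kf ` set ts))"
  have kK: "kf t \<le> K" if "t \<in> set ts" for t unfolding K_def using that by simp
  obtain k' where k': "eventually (\<lambda>i. \<forall>xs. length xs = arf f \<and> set xs \<subseteq> Srt (M i) K
     \<longrightarrow> Fn (M i) f xs \<in> Srt (M i) k') D" using fnS_pw by blast
  have ev: "eventually (\<lambda>i. \<forall>t\<in>set ts. \<forall>\<rho>. (\<forall>v\<in>fv_trm t. \<rho> v \<in> Srt (M i) m)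
     \<longrightarrow> teval (M i) \<rho> t \<in> Srt (M i) (kf t)) D"
    using kf by (intro eventually_ball_finite) auto
  have len: "length ts = arf f" using App.prems by simp
  show ?case
  proof (rule exI[of _ k'])
    show "eventually (\<lambda>i. \<forall>\<rho>. (\<forall>v\<in>fv_trm (App f ts). \<rho> v \<in> Srt (M i) m)
     \<longrightarrow> teval (M i) \<rho> (App f ts) \<in> Srt (M i) k') D"
      using ev k'
    proof eventually_elim
      case (elim i)
      show ?case
      proof (intro allI impI)
        fix \<rho> assume r: "\<forall>v\<in>fv_trm (App f ts). \<rho> v \<in> Srt (M i) m"
        have "set (map (teval (M i) \<rho>) ts) \<subseteq> Srt (M i) K"
        proof
          fix a assume "a \<in> set (map (teval (M i) \<rho>) ts)"
          then obtain t where t: "t \<in> set ts" "a = teval (M i) \<rho> t" by auto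
          have "\<forall>v\<in>fv_trm t. \<rho> v \<in> Srt (M i) m" using r t(1) by auto
          then have "a \<in> Srt (M i) (kf t)" using elim(1) t by blast
          then show "a \<in> Srt (M i) K" using Srt_mono[OF kK[OF t(1)]] by blast
        qed
        then show "teval (M i) \<rho> (App f ts) \<in> Srt (M i) k'" using elim(2) len by simp
      qed
    qed
  qed
qed

definition useq :: "(nat \<Rightarrow> 'i \<Rightarrow> 'a) \<Rightarrow> 'f trm \<Rightarrow> 'i \<Rightarrow> 'a" where
  "useq e t = (\<lambda>i. teval (M i) (\<lambda>v. e v i) t)"

lemma trm_local: assumes "wf_trm arf t" "\<forall>v\<in>fv_trm t. is_local M D (e v)"
  shows "is_local M D (useq e t)"
proof -
  obtain k where k: "\<forall>v\<in>fv_trm t. in_S M D k (e v)"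
    using local_set[OF finite_fv_trm assms(2)] by blast
  have ev: "eventually (\<lambda>i. \<forall>v\<in>fv_trm t. e v i \<in> Srt (M i) k) D"
    by (rule in_S_ev[OF finite_fv_trm k])
  obtain k' where k': "eventually (\<lambda>i. \<forall>\<rho>. (\<forall>v\<in>fv_trm t. \<rho> v \<in> Srt (M i) k)
   \<longrightarrow> teval (M i) \<rho> t \<in> Srt (M i) k') D" using trm_pw[OF assms(1)] by blast
  have "in_S M D k' (useq e t)" unfolding in_S_def useq_def
    using ev k'
  proof eventually_elim
    case (elim i) show ?case using elim(2)[rule_format, of "\<lambda>v. e v i"] elim(1) by simp
  qed
  then show ?thesis unfolding is_local_def by blast
qed

lemma trm_loc: "wf_trm arf t \<Longrightarrow> \<forall>v\<in>fv_trm t. is_local M D (e v) \<and> E v = lm_loc M D (e v) \<Longrightarrow>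
  teval (Mloc M D) E t = lm_loc M D (useq e t)"
proof (induction t)
  case (Var v)
  then show ?case by (simp add: useq_def)
next
  case (App f ts)
  let ?u = "useq e"
  have len: "length ts = arf f" using App.prems by simp
  have ih: "teval (Mloc M D) E t = lm_loc M D (?u t)" if "t \<in> set ts" for t
    using App that by auto
  have loc: "is_local M D (?u t)" if "t \<in> set ts" for t
    using trm_local[of t e] App.prems that by auto
  define xs where "xs = map (\<lambda>t. rep (lm_loc M D (?u t))) ts"
  define ys where "ys = map ?u ts"
  have "map (\<lambda>x. rep (teval (Mloc M D) E x)) ts = map (\<lambda>t. rep (lm_loc M D (?u t))) ts"
    by (rule map_cong) (simp_all add: ih)
  then have lhs: "teval (Mloc M D) E (App f ts) = lm_loc M D (app_seq M f xs)"
    by (simp add: Mloc_Fn xs_def o_def del: map_eq_conv)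
  have rhs: "useq e (App f ts) = app_seq M f ys"
    by (simp add: useq_def app_seq_def ys_def o_def)
  have "\<forall>x\<in>set (xs @ ys). is_local M D x"
    using loc rep_local by (auto simp: xs_def ys_def)
  then obtain K where K: "\<forall>x\<in>set (xs @ ys). in_S M D K x" using local_list by blast
  obtain k' where k': "\<forall>zs. length zs = arf f \<and> (\<forall>x\<in>set zs. in_S M D K x) \<longrightarrow>
        in_S M D k' (app_seq M f zs)" using fnS by blast
  have lx: "length xs = arf f" and ly: "length ys = arf f" using len by (auto simp: xs_def ys_def)
  have ax: "is_local M D (app_seq M f xs)" using k' K lx unfolding is_local_def by auto
  have ay: "is_local M D (app_seq M f ys)" using k' K ly unfolding is_local_def by auto
  have cl: "inf_close M D (app_seq M f xs) (app_seq M f ys)"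
    unfolding inf_close_eps
  proof (intro allI impI)
    fix \<epsilon> :: real assume "\<epsilon> > 0"
    from fcont[OF this, of f K] obtain \<delta> where \<delta>: "\<delta> > 0" "\<forall>xs ys. length xs = arf f \<and> length ys = arf f
        \<and> (\<forall>x\<in>set xs. in_S M D K x) \<and> (\<forall>y\<in>set ys. in_S M D K y)
        \<and> (\<forall>j<arf f. eventually (\<lambda>i. Dst (M i) ((xs ! j) i) ((ys ! j) i) < \<delta>) D) \<longrightarrow>
        eventually (\<lambda>i. Dst (M i) (app_seq M f xs i) (app_seq M f ys i) < \<epsilon>) D" by blast
    have "eventually (\<lambda>i. Dst (M i) ((xs ! j) i) ((ys ! j) i) < \<delta>) D" if j: "j < arf f" for j
    proof -
      have tj: "ts ! j \<in> set ts" using j len by simp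
      have "inf_close M D (?u (ts ! j)) (rep (lm_loc M D (?u (ts ! j))))"
        by (rule rep_close[OF loc[OF tj]])
      then have "inf_close M D (rep (lm_loc M D (?u (ts ! j)))) (?u (ts ! j))"
        using close_sym local_ult loc[OF tj] rep_local[OF loc[OF tj]] by blast
      then show ?thesis using \<delta>(1) j len unfolding inf_close_eps by (simp add: xs_def ys_def)
    qed
    then show "eventually (\<lambda>i. Dst (M i) (app_seq M f xs i) (app_seq M f ys i) < \<epsilon>) D"
      using \<delta>(2) lx ly K by auto
  qed
  show ?case using lhs rhs lm_loc_eq[OF ax ay cl] by simp
qed

end

lemma sup_abs_bound:
  fixes h :: "'b \<Rightarrow> real"
  assumes "A \<noteq> {}" "\<forall>a\<in>A. \<bar>h a\<bar> \<le> B"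
  shows "\<bar>SUP a\<in>A. h a\<bar> \<le> B"
proof -
  have bdd: "bdd_above (h ` A)" using assms(2) by (intro bdd_aboveI2[where M=B]) (auto simp: abs_le_iff)
  obtain a0 where a0: "a0 \<in> A" using assms(1) by blast
  have "(SUP a\<in>A. h a) \<le> B" using assms by (intro cSUP_least) (auto simp: abs_le_iff)
  moreover have "h a0 \<le> (SUP a\<in>A. h a)" using a0 bdd by (rule cSUP_upper)
  moreover have "-B \<le> h a0" using a0 assms(2) by (auto simp: abs_le_iff)
  ultimately show ?thesis by (simp add: abs_le_iff)
qed

lemma inf_abs_bound:
  fixes h :: "'b \<Rightarrow> real"
  assumes "A \<noteq> {}" "\<forall>a\<in>A. \<bar>h a\<bar> \<le> B"
  shows "\<bar>INF a\<in>A. h a\<bar> \<le> B"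
proof -
  have bdd: "bdd_below (h ` A)" using assms(2) by (intro bdd_belowI2[where m="-B"]) (auto simp: abs_le_iff)
  obtain a0 where a0: "a0 \<in> A" using assms(1) by blast
  have "-B \<le> (INF a\<in>A. h a)" using assms by (intro cINF_greatest) (auto simp: abs_le_iff)
  moreover have "(INF a\<in>A. h a) \<le> h a0" using bdd a0 by (rule cINF_lower)
  moreover have "h a0 \<le> B" using a0 assms(2) by (auto simp: abs_le_iff)
  ultimately show ?thesis by (simp add: abs_le_iff)
qed

context em begin

lemma fml_bnd: "wf_fml arf arp \<phi> \<Longrightarrow> \<exists>B. eventually (\<lambda>i. \<forall>\<rho>. (\<forall>v\<in>fv \<phi>. \<rho> v \<in> Srt (M i) k)
   \<longrightarrow> \<bar>eval (M i) \<rho> \<phi>\<bar> \<le> B) D"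
proof (induction \<phi> arbitrary: k)
  case (FDist t1 t2)
  obtain k1 where k1: "eventually (\<lambda>i. \<forall>\<rho>. (\<forall>v\<in>fv_trm t1. \<rho> v \<in> Srt (M i) k)
   \<longrightarrow> teval (M i) \<rho> t1 \<in> Srt (M i) k1) D" using trm_pw FDist by (meson wf_fml.simps(1))
  obtain k2 where k2: "eventually (\<lambda>i. \<forall>\<rho>. (\<forall>v\<in>fv_trm t2. \<rho> v \<in> Srt (M i) k)
   \<longrightarrow> teval (M i) \<rho> t2 \<in> Srt (M i) k2) D" using trm_pw FDist by (meson wf_fml.simps(1))
  let ?K = "max k1 k2"
  show ?case
  proof (rule exI[of _ "real ?K"])
    show "eventually (\<lambda>i. \<forall>\<rho>. (\<forall>v\<in>fv (FDist t1 t2). \<rho> v \<in> Srt (M i) k)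
       \<longrightarrow> \<bar>eval (M i) \<rho> (FDist t1 t2)\<bar> \<le> real ?K) D"
      using k1 k2 dbound_pw[of ?K]
    proof eventually_elim
      case (elim i)
      show ?case
      proof (intro allI impI)
        fix \<rho> assume r: "\<forall>v\<in>fv (FDist t1 t2). \<rho> v \<in> Srt (M i) k"
        have "teval (M i) \<rho> t1 \<in> Srt (M i) k1" using elim(1) r by simp
        then have a1: "teval (M i) \<rho> t1 \<in> Srt (M i) ?K" using Srt_mono[of k1 ?K i] by auto
        have "teval (M i) \<rho> t2 \<in> Srt (M i) k2" using elim(2) r by simp
        then have a2: "teval (M i) \<rho> t2 \<in> Srt (M i) ?K" using Srt_mono[of k2 ?K i] by auto
        have "Dst (M i) (teval (M i) \<rho> t1) (teval (M i) \<rho> t2) \<le> real ?K" using elim(3) a1 a2 by blast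
        moreover have "Dst (M i) (teval (M i) \<rho> t1) (teval (M i) \<rho> t2) \<ge> 0"
          using a1 a2 Srt_univ dst_nonneg by blast
        ultimately show "\<bar>eval (M i) \<rho> (FDist t1 t2)\<bar> \<le> real ?K" by simp
      qed
    qed
  qed
next
  case (FRel P ts)
  show ?case by (rule exI[of _ 1]) simp
next
  case (FConn c fs)
  have "\<forall>g\<in>set fs. \<exists>B. eventually (\<lambda>i. \<forall>\<rho>. (\<forall>v\<in>fv g. \<rho> v \<in> Srt (M i) k)
   \<longrightarrow> \<bar>eval (M i) \<rho> g\<bar> \<le> B) D" using FConn by simp
  then obtain Bf where Bf: "\<forall>g\<in>set fs. eventually (\<lambda>i. \<forall>\<rho>. (\<forall>v\<in>fv g. \<rho> v \<in> Srt (M i) k)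
   \<longrightarrow> \<bar>eval (M i) \<rho> g\<bar> \<le> Bf g) D" by (rule bchoice[elim_format]) blast
  define B0 where "B0 = Max (insert 0 (Bf ` set fs))"
  have bB: "Bf g \<le> B0" if "g \<in> set fs" for g unfolding B0_def using that by simp
  have cc: "cont_conn (length fs) c" using FConn.prems by simp
  obtain K where K: "\<forall>x. length x = length fs \<and> (\<forall>j<length fs. \<bar>x ! j\<bar> \<le> B0) \<longrightarrow> \<bar>c x\<bar> \<le> K"
    using cont_conn_bounded[OF cc] by blast
  have ev: "eventually (\<lambda>i. \<forall>g\<in>set fs. \<forall>\<rho>. (\<forall>v\<in>fv g. \<rho> v \<in> Srt (M i) k)
   \<longrightarrow> \<bar>eval (M i) \<rho> g\<bar> \<le> Bf g) D" using Bf by (intro eventually_ball_finite) auto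
  show ?case
  proof (rule exI[of _ K])
    show "eventually (\<lambda>i. \<forall>\<rho>. (\<forall>v\<in>fv (FConn c fs). \<rho> v \<in> Srt (M i) k)
       \<longrightarrow> \<bar>eval (M i) \<rho> (FConn c fs)\<bar> \<le> K) D"
      using ev
    proof eventually_elim
      case (elim i)
      show ?case
      proof (intro allI impI)
        fix \<rho> assume r: "\<forall>v\<in>fv (FConn c fs). \<rho> v \<in> Srt (M i) k"
        have "\<forall>j<length fs. \<bar>map (eval (M i) \<rho>) fs ! j\<bar> \<le> B0"
        proof (intro allI impI)
          fix j assume j: "j < length fs"
          then have g: "fs ! j \<in> set fs" by simp
          have "\<forall>v\<in>fv (fs ! j). \<rho> v \<in> Srt (M i) k" using r g by auto
          then have "\<bar>eval (M i) \<rho> (fs ! j)\<bar> \<le> Bf (fs ! j)" using elim g by blast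
          then show "\<bar>map (eval (M i) \<rho>) fs ! j\<bar> \<le> B0" using bB[OF g] j by simp
        qed
        then show "\<bar>eval (M i) \<rho> (FConn c fs)\<bar> \<le> K" using K by simp
      qed
    qed
  qed
next
  case (FSup m x g)
  obtain B where B: "eventually (\<lambda>i. \<forall>\<rho>. (\<forall>v\<in>fv g. \<rho> v \<in> Srt (M i) (max k m))
   \<longrightarrow> \<bar>eval (M i) \<rho> g\<bar> \<le> B) D" using FSup by auto
  show ?case
  proof (rule exI[of _ "max B \<bar>Sup ({}::real set)\<bar>"])
    show "eventually (\<lambda>i. \<forall>\<rho>. (\<forall>v\<in>fv (FSup m x g). \<rho> v \<in> Srt (M i) k)
       \<longrightarrow> \<bar>eval (M i) \<rho> (FSup m x g)\<bar> \<le> max B \<bar>Sup ({}::real set)\<bar>) D"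
      using B
    proof eventually_elim
      case (elim i)
      show ?case
      proof (intro allI impI)
        fix \<rho> assume r: "\<forall>v\<in>fv (FSup m x g). \<rho> v \<in> Srt (M i) k"
        have hb: "\<forall>a\<in>Srt (M i) m. \<bar>eval (M i) (\<rho>(x := a)) g\<bar> \<le> B"
        proof
          fix a assume a: "a \<in> Srt (M i) m"
          have "\<forall>v\<in>fv g. (\<rho>(x := a)) v \<in> Srt (M i) (max k m)"
          proof
            fix v assume v: "v \<in> fv g"
            show "(\<rho>(x := a)) v \<in> Srt (M i) (max k m)"
            proof (cases "v = x")
              case True then show ?thesis using a Srt_mono[of m "max k m" i] by auto
            next
              case False then show ?thesis using r v Srt_mono[of k "max k m" i] by auto
            qed
          qed
          then show "\<bar>eval (M i) (\<rho>(x := a)) g\<bar> \<le> B" using elim by blast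
        qed
        show "\<bar>eval (M i) \<rho> (FSup m x g)\<bar> \<le> max B \<bar>Sup ({}::real set)\<bar>"
        proof (cases "Srt (M i) m = {}")
          case True then show ?thesis by simp
        next
          case False
          from sup_abs_bound[OF False hb] show ?thesis by simp
        qed
      qed
    qed
  qed
next
  case (FInf m x g)
  obtain B where B: "eventually (\<lambda>i. \<forall>\<rho>. (\<forall>v\<in>fv g. \<rho> v \<in> Srt (M i) (max k m))
   \<longrightarrow> \<bar>eval (M i) \<rho> g\<bar> \<le> B) D" using FInf by auto
  show ?case
  proof (rule exI[of _ "max B \<bar>Inf ({}::real set)\<bar>"])
    show "eventually (\<lambda>i. \<forall>\<rho>. (\<forall>v\<in>fv (FInf m x g). \<rho> v \<in> Srt (M i) k)
       \<longrightarrow> \<bar>eval (M i) \<rho> (FInf m x g)\<bar> \<le> max B \<bar>Inf ({}::real set)\<bar>) D"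
      using B
    proof eventually_elim
      case (elim i)
      show ?case
      proof (intro allI impI)
        fix \<rho> assume r: "\<forall>v\<in>fv (FInf m x g). \<rho> v \<in> Srt (M i) k"
        have hb: "\<forall>a\<in>Srt (M i) m. \<bar>eval (M i) (\<rho>(x := a)) g\<bar> \<le> B"
        proof
          fix a assume a: "a \<in> Srt (M i) m"
          have "\<forall>v\<in>fv g. (\<rho>(x := a)) v \<in> Srt (M i) (max k m)"
          proof
            fix v assume v: "v \<in> fv g"
            show "(\<rho>(x := a)) v \<in> Srt (M i) (max k m)"
            proof (cases "v = x")
              case True then show ?thesis using a Srt_mono[of m "max k m" i] by auto
            next
              case False then show ?thesis using r v Srt_mono[of k "max k m" i] by auto
            qed
          qed
          then show "\<bar>eval (M i) (\<rho>(x := a)) g\<bar> \<le> B" using elim by blast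
        qed
        show "\<bar>eval (M i) \<rho> (FInf m x g)\<bar> \<le> max B \<bar>Inf ({}::real set)\<bar>"
        proof (cases "Srt (M i) m = {}")
          case True then show ?thesis by simp
        next
          case False
          from inf_abs_bound[OF False hb] show ?thesis by simp
        qed
      qed
    qed
  qed
qed

end

context em begin

lemma empty_case:
  assumes "eventually (\<lambda>i. Srt (M i) m = {}) D"
  shows "{y. in_S M D m y} = {}"
proof (rule ccontr)
  assume "{y. in_S M D m y} \<noteq> {}"
  then obtain y where "in_S M D m y" by blast
  then have "eventually (\<lambda>i. y i \<in> Srt (M i) m) D" by (simp add: in_S_def)
  moreover have "eventually (\<lambda>i. \<not> y i \<in> Srt (M i) m) D" using assms by (rule eventually_mono) simp
  ultimately show False by (rule ev_contra)
qed

lemma sup_step: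
  fixes f :: "'i \<Rightarrow> 'a \<Rightarrow> real" and G :: "('i \<Rightarrow> 'a) \<Rightarrow> real"
  assumes conv: "\<And>y. in_S M D m y \<Longrightarrow> ((\<lambda>i. f i (y i)) \<longlongrightarrow> G y) D"
    and bnd: "eventually (\<lambda>i. \<forall>a\<in>Srt (M i) m. \<bar>f i a\<bar> \<le> B) D"
  shows "((\<lambda>i. SUP a\<in>Srt (M i) m. f i a) \<longlongrightarrow> (SUP y\<in>{y. in_S M D m y}. G y)) D"
proof (cases "eventually (\<lambda>i. Srt (M i) m = {}) D")
  case True
  then have "{y. in_S M D m y} = {}" by (rule empty_case)
  then show ?thesis using True by (auto intro!: tendsto_eventually elim: eventually_mono)
next
  case False
  then have ne: "eventually (\<lambda>i. Srt (M i) m \<noteq> {}) D" using not_ev by blast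
  let ?S = "{y. in_S M D m y}"
  define Y0 where "Y0 i = (SOME a. a \<in> Srt (M i) m)" for i
  have "in_S M D m Y0" unfolding in_S_def Y0_def using ne
    by (rule eventually_mono) (auto intro: someI_ex)
  then have Sne: "?S \<noteq> {}" by blast
  have Gb: "\<bar>G y\<bar> \<le> B" if y: "in_S M D m y" for y
  proof -
    have ev: "eventually (\<lambda>i. \<bar>f i (y i)\<bar> \<le> B) D"
      using bnd y[unfolded in_S_def] by eventually_elim blast
    have "G y \<le> B" using conv[OF y] ev ntriv
      by (intro tendsto_upperbound[of "\<lambda>i. f i (y i)"]) (auto elim: eventually_mono simp: abs_le_iff)
    moreover have "-B \<le> G y" using conv[OF y] ev ntriv
      by (intro tendsto_lowerbound[of "\<lambda>i. f i (y i)"]) (auto elim: eventually_mono simp: abs_le_iff)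
    ultimately show ?thesis by (simp add: abs_le_iff)
  qed
  have bddG: "bdd_above (G ` ?S)" using Gb by (intro bdd_aboveI2[where M=B]) (auto simp: abs_le_iff)
  let ?R = "SUP y\<in>?S. G y"
  have bddf: "eventually (\<lambda>i. bdd_above ((f i) ` Srt (M i) m)) D"
    using bnd by (rule eventually_mono) (intro bdd_aboveI2[where M=B], auto simp: abs_le_iff)
  show ?thesis
  proof (rule order_tendstoI)
    fix a assume "a < ?R"
    then obtain y where y: "in_S M D m y" "a < G y" using less_cSUP_iff[OF Sne bddG] by auto
    have "eventually (\<lambda>i. a < f i (y i)) D" using order_tendstoD(1)[OF conv[OF y(1)] y(2)] .
    then show "eventually (\<lambda>i. a < (SUP a\<in>Srt (M i) m. f i a)) D"
      using bddf y(1)[unfolded in_S_def]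
    proof eventually_elim
      case (elim i)
      then show ?case using cSUP_upper[OF elim(3) elim(2)] by linarith
    qed
  next
    fix a assume aR: "?R < a"
    show "eventually (\<lambda>i. (SUP a\<in>Srt (M i) m. f i a) < a) D"
    proof (rule ccontr)
      assume "\<not> ?thesis"
      then have ev: "eventually (\<lambda>i. \<not> (SUP a\<in>Srt (M i) m. f i a) < a) D" by (rule not_ev)
      define a' where "a' = (?R + a) / 2"
      have a': "?R < a'" "a' < a" using aR by (auto simp: a'_def)
      let ?P = "\<lambda>i b. b \<in> Srt (M i) m \<and> a' < f i b"
      have evP: "eventually (\<lambda>i. \<exists>b. ?P i b) D" using ev ne bddf
      proof eventually_elim
        case (elim i)
        then have "a' < (SUP a\<in>Srt (M i) m. f i a)" using a' by linarith
        then show ?case using less_cSUP_iff[OF elim(2) elim(3)] by blast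
      qed
      define Y where "Y i = (SOME b. ?P i b)" for i
      have evY: "eventually (\<lambda>i. ?P i (Y i)) D"
        using evP by (rule eventually_mono) (unfold Y_def, erule someI_ex)
      have Y: "in_S M D m Y" unfolding in_S_def using evY by (rule eventually_mono) simp
      have "a' \<le> G Y" using conv[OF Y] ntriv evY
        by (intro tendsto_lowerbound[of "\<lambda>i. f i (Y i)"]) (auto elim: eventually_mono)
      moreover have "G Y \<le> ?R" using Y bddG by (intro cSUP_upper) auto
      ultimately show False using a' by linarith
    qed
  qed
qed

end

context em begin

lemma inf_step:
  fixes f :: "'i \<Rightarrow> 'a \<Rightarrow> real" and G :: "('i \<Rightarrow> 'a) \<Rightarrow> real"
  assumes conv: "\<And>y. in_S M D m y \<Longrightarrow> ((\<lambda>i. f i (y i)) \<longlongrightarrow> G y) D"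
    and bnd: "eventually (\<lambda>i. \<forall>a\<in>Srt (M i) m. \<bar>f i a\<bar> \<le> B) D"
  shows "((\<lambda>i. INF a\<in>Srt (M i) m. f i a) \<longlongrightarrow> (INF y\<in>{y. in_S M D m y}. G y)) D"
proof (cases "eventually (\<lambda>i. Srt (M i) m = {}) D")
  case True
  then have "{y. in_S M D m y} = {}" by (rule empty_case)
  then show ?thesis using True by (auto intro!: tendsto_eventually elim: eventually_mono)
next
  case False
  then have ne: "eventually (\<lambda>i. Srt (M i) m \<noteq> {}) D" using not_ev by blast
  let ?S = "{y. in_S M D m y}"
  define Y0 where "Y0 i = (SOME a. a \<in> Srt (M i) m)" for i
  have "in_S M D m Y0" unfolding in_S_def Y0_def using ne
    by (rule eventually_mono) (auto intro: someI_ex)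
  then have Sne: "?S \<noteq> {}" by blast
  have Gb: "\<bar>G y\<bar> \<le> B" if y: "in_S M D m y" for y
  proof -
    have ev: "eventually (\<lambda>i. \<bar>f i (y i)\<bar> \<le> B) D"
      using bnd y[unfolded in_S_def] by eventually_elim blast
    have "G y \<le> B" using conv[OF y] ev ntriv
      by (intro tendsto_upperbound[of "\<lambda>i. f i (y i)"]) (auto elim: eventually_mono simp: abs_le_iff)
    moreover have "-B \<le> G y" using conv[OF y] ev ntriv
      by (intro tendsto_lowerbound[of "\<lambda>i. f i (y i)"]) (auto elim: eventually_mono simp: abs_le_iff)
    ultimately show ?thesis by (simp add: abs_le_iff)
  qed
  have bddG: "bdd_below (G ` ?S)" using Gb by (intro bdd_belowI2[where m="-B"]) (force simp: abs_le_iff)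
  let ?R = "INF y\<in>?S. G y"
  have bddf: "eventually (\<lambda>i. bdd_below ((f i) ` Srt (M i) m)) D"
    using bnd by (rule eventually_mono) (intro bdd_belowI2[where m="-B"], auto simp: abs_le_iff)
  show ?thesis
  proof (rule order_tendstoI)
    fix a assume "?R < a"
    then obtain y where y: "in_S M D m y" "G y < a" using cINF_less_iff[OF Sne bddG] by auto
    have "eventually (\<lambda>i. f i (y i) < a) D" using order_tendstoD(2)[OF conv[OF y(1)] y(2)] .
    then show "eventually (\<lambda>i. (INF a\<in>Srt (M i) m. f i a) < a) D"
      using bddf y(1)[unfolded in_S_def]
    proof eventually_elim
      case (elim i)
      then show ?case using cINF_lower[OF elim(2) elim(3)] by linarith
    qed
  next
    fix a assume aR: "a < ?R"
    show "eventually (\<lambda>i. a < (INF a\<in>Srt (M i) m. f i a)) D"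
    proof (rule ccontr)
      assume "\<not> ?thesis"
      then have ev: "eventually (\<lambda>i. \<not> a < (INF a\<in>Srt (M i) m. f i a)) D" by (rule not_ev)
      define a' where "a' = (?R + a) / 2"
      have a': "a' < ?R" "a < a'" using aR by (auto simp: a'_def)
      let ?P = "\<lambda>i b. b \<in> Srt (M i) m \<and> f i b < a'"
      have evP: "eventually (\<lambda>i. \<exists>b. ?P i b) D" using ev ne bddf
      proof eventually_elim
        case (elim i)
        then have "(INF a\<in>Srt (M i) m. f i a) < a'" using a' by linarith
        then show ?case using cINF_less_iff[OF elim(2) elim(3)] by blast
      qed
      define Y where "Y i = (SOME b. ?P i b)" for i
      have evY: "eventually (\<lambda>i. ?P i (Y i)) D"
        using evP by (rule eventually_mono) (unfold Y_def, erule someI_ex)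
      have Y: "in_S M D m Y" unfolding in_S_def using evY by (rule eventually_mono) simp
      have "G Y \<le> a'" using conv[OF Y] ntriv evY
        by (intro tendsto_upperbound[of "\<lambda>i. f i (Y i)"]) (auto elim: eventually_mono)
      moreover have "?R \<le> G Y" using Y bddG by (intro cINF_lower) auto
      ultimately show False using a' by linarith
    qed
  qed
qed

end

context em begin

lemma los: "wf_fml arf arp \<phi> \<Longrightarrow> \<forall>v\<in>fv \<phi>. is_local M D (e v) \<and> E v = lm_loc M D (e v) \<Longrightarrow>
  ((\<lambda>i. eval (M i) (\<lambda>v. e v i) \<phi>) \<longlongrightarrow> eval (Mloc M D) E \<phi>) D"
proof (induction \<phi> arbitrary: e E)
  case (FDist t1 t2)
  let ?u1 = "useq e t1" and ?u2 = "useq e t2"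
  have w1: "wf_trm arf t1" and w2: "wf_trm arf t2" using FDist by auto
  have h1: "\<forall>v\<in>fv_trm t1. is_local M D (e v) \<and> E v = lm_loc M D (e v)" using FDist by auto
  have h2: "\<forall>v\<in>fv_trm t2. is_local M D (e v) \<and> E v = lm_loc M D (e v)" using FDist by auto
  have l1: "is_local M D ?u1" using trm_local[OF w1] h1 by blast
  have l2: "is_local M D ?u2" using trm_local[OF w2] h2 by blast
  have T1: "teval (Mloc M D) E t1 = lm_loc M D ?u1" using trm_loc[OF w1 h1] .
  have T2: "teval (Mloc M D) E t2 = lm_loc M D ?u2" using trm_loc[OF w2 h2] .
  let ?r1 = "rep (lm_loc M D ?u1)" and ?r2 = "rep (lm_loc M D ?u2)"
  have lr1: "is_local M D ?r1" using rep_local[OF l1] .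
  have lr2: "is_local M D ?r2" using rep_local[OF l2] .
  have c1: "inf_close M D ?u1 ?r1" using rep_close[OF l1] .
  have c2: "inf_close M D ?u2 ?r2" using rep_close[OF l2] .
  have c1': "inf_close M D ?r1 ?u1" using close_sym[OF local_ult[OF l1] local_ult[OF lr1] c1] .
  have c2': "inf_close M D ?r2 ?u2" using close_sym[OF local_ult[OF l2] local_ult[OF lr2] c2] .
  have lhs: "(\<lambda>i. eval (M i) (\<lambda>v. e v i) (FDist t1 t2)) = (\<lambda>i. Dst (M i) (?u1 i) (?u2 i))"
    by (simp add: useq_def)
  have rhs: "eval (Mloc M D) E (FDist t1 t2) = Lim D (\<lambda>i. Dst (M i) (?r1 i) (?r2 i))"
    by (simp add: T1 T2 Mloc_Dst)
  obtain K where K: "\<forall>x\<in>set [?u1, ?u2]. in_S M D K x" using local_list[of "[?u1, ?u2]"] l1 l2 by auto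
  have "eventually (\<lambda>i. \<bar>Dst (M i) (?u1 i) (?u2 i)\<bar> \<le> real K) D"
    using dbound[of K ?u1 ?u2] K[unfolded in_S_def] 
  proof -
    have a: "eventually (\<lambda>i. Dst (M i) (?u1 i) (?u2 i) \<le> real K) D" using dbound K by simp
    have b: "eventually (\<lambda>i. ?u1 i \<in> Srt (M i) K \<and> ?u2 i \<in> Srt (M i) K) D"
      using K unfolding in_S_def by (simp add: eventually_conj)
    from a b show ?thesis
    proof eventually_elim
      case (elim i)
      then have "Dst (M i) (?u1 i) (?u2 i) \<ge> 0" using Srt_univ dst_nonneg by blast
      then show ?case using elim by simp
    qed
  qed
  from uf_lim_exists[OF uf this] obtain L where L: "((\<lambda>i. Dst (M i) (?u1 i) (?u2 i)) \<longlongrightarrow> L) D" by blast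
  have R: "((\<lambda>i. Dst (M i) (?r1 i) (?r2 i)) \<longlongrightarrow> L) D"
    unfolding tendsto_iff dist_real_def
  proof (intro allI impI)
    fix \<epsilon> :: real assume e: "\<epsilon> > 0"
    then have e3: "\<epsilon>/3 > 0" by simp
    have a: "eventually (\<lambda>i. \<bar>Dst (M i) (?u1 i) (?u2 i) - L\<bar> < \<epsilon>/3) D"
      using L e3 unfolding tendsto_iff dist_real_def by blast
    have b1: "eventually (\<lambda>i. Dst (M i) (?u1 i) (?r1 i) < \<epsilon>/3) D" using c1 e3 unfolding inf_close_eps by blast
    have b2: "eventually (\<lambda>i. Dst (M i) (?r1 i) (?u1 i) < \<epsilon>/3) D" using c1' e3 unfolding inf_close_eps by blast
    have b3: "eventually (\<lambda>i. Dst (M i) (?u2 i) (?r2 i) < \<epsilon>/3) D" using c2 e3 unfolding inf_close_eps by blast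
    have b4: "eventually (\<lambda>i. Dst (M i) (?r2 i) (?u2 i) < \<epsilon>/3) D" using c2' e3 unfolding inf_close_eps by blast
    have u1: "in_ult M D ?u1" and u2: "in_ult M D ?u2" and ur1: "in_ult M D ?r1" and ur2: "in_ult M D ?r2"
      using l1 l2 lr1 lr2 local_ult by auto
    have t1: "eventually (\<lambda>i. Dst (M i) (?r1 i) (?r2 i) \<le> Dst (M i) (?r1 i) (?u1 i) + Dst (M i) (?u1 i) (?r2 i)) D"
      by (rule dtri[OF ur1 u1 ur2])
    have t2: "eventually (\<lambda>i. Dst (M i) (?u1 i) (?r2 i) \<le> Dst (M i) (?u1 i) (?u2 i) + Dst (M i) (?u2 i) (?r2 i)) D"
      by (rule dtri[OF u1 u2 ur2])
    have t3: "eventually (\<lambda>i. Dst (M i) (?u1 i) (?u2 i) \<le> Dst (M i) (?u1 i) (?r1 i) + Dst (M i) (?r1 i) (?u2 i)) D"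
      by (rule dtri[OF u1 ur1 u2])
    have t4: "eventually (\<lambda>i. Dst (M i) (?r1 i) (?u2 i) \<le> Dst (M i) (?r1 i) (?r2 i) + Dst (M i) (?r2 i) (?u2 i)) D"
      by (rule dtri[OF ur1 ur2 u2])
    from a b1 b2 b3 b4 t1 t2 t3 t4
    show "eventually (\<lambda>i. \<bar>Dst (M i) (?r1 i) (?r2 i) - L\<bar> < \<epsilon>) D"
    proof eventually_elim
      case (elim i)
      from elim(1) have "Dst (M i) (?u1 i) (?u2 i) - L < \<epsilon>/3" "L - Dst (M i) (?u1 i) (?u2 i) < \<epsilon>/3"
        using abs_less_iff[of "Dst (M i) (?u1 i) (?u2 i) - L" "\<epsilon>/3"] by linarith+
      with elim(2-9) show ?case unfolding abs_less_iff by linarith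
    qed
  qed
  have "eval (Mloc M D) E (FDist t1 t2) = L" using rhs tendsto_Lim[OF ntriv R] by simp
  then show ?case using lhs L by simp
next
  case (FRel P ts)
  let ?us = "map (useq e) ts"
  have wts: "\<forall>t\<in>set ts. wf_trm arf t" and len: "length ts = arp P" using FRel.prems by auto
  have ht: "\<forall>v\<in>fv_trm t. is_local M D (e v) \<and> E v = lm_loc M D (e v)" if "t \<in> set ts" for t
    using FRel.prems that by auto
  have locs: "\<forall>x\<in>set ?us. is_local M D x" using trm_local wts ht by auto
  then obtain K where K: "\<forall>x\<in>set ?us. in_S M D K x" using local_list by blast
  have mT: "map (teval (Mloc M D) E) ts = map (\<lambda>t. lm_loc M D (useq e t)) ts"
    by (rule map_cong) (use trm_loc wts ht in auto)
  have lhs: "(\<lambda>i. eval (M i) (\<lambda>v. e v i) (FRel P ts)) =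
      (\<lambda>i. if Rel (M i) P (map (\<lambda>x. x i) ?us) then 0 else 1)"
    by (simp add: useq_def o_def)
  have rhs: "eval (Mloc M D) E (FRel P ts) = (if (\<exists>xs. length xs = length ts \<and>
      (\<forall>j<length ts. xs ! j \<in> lm_loc M D (?us ! j)) \<and> rel_seq M D P xs) then 0 else 1)"
    by (simp add: mT Mloc_Rel del: map_eq_conv)
  show ?case
  proof (cases "rel_seq M D P ?us")
    case True
    have "(\<exists>xs. length xs = length ts \<and> (\<forall>j<length ts. xs ! j \<in> lm_loc M D (?us ! j)) \<and> rel_seq M D P xs)"
      by (rule exI[of _ ?us]) (use True locs mem_lm_loc in auto)
    then have "eval (Mloc M D) E (FRel P ts) = 0" using rhs by simp
    moreover have "eventually (\<lambda>i. eval (M i) (\<lambda>v. e v i) (FRel P ts) = 0) D"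
      using True unfolding rel_seq_def by (rule eventually_mono) (simp add: useq_def o_def)
    ultimately show ?thesis by (simp add: tendsto_eventually)
  next
    case False
    obtain \<delta> where \<delta>: "\<delta> > 0" "\<forall>xs. length xs = arp P \<and> (\<forall>x\<in>set xs. in_ult M D x)
           \<and> (\<forall>j<arp P. eventually (\<lambda>i. Dst (M i) ((?us ! j) i) ((xs ! j) i) < \<delta>) D) \<longrightarrow>
           \<not> rel_seq M D P xs"
      using relopen[of ?us P K] len K False by auto
    have "\<not> (\<exists>xs. length xs = length ts \<and> (\<forall>j<length ts. xs ! j \<in> lm_loc M D (?us ! j)) \<and> rel_seq M D P xs)"
    proof
      assume "\<exists>xs. length xs = length ts \<and> (\<forall>j<length ts. xs ! j \<in> lm_loc M D (?us ! j)) \<and> rel_seq M D P xs"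
      then obtain xs where xs: "length xs = length ts" "\<forall>j<length ts. xs ! j \<in> lm_loc M D (?us ! j)"
        "rel_seq M D P xs" by blast
      have "\<forall>x\<in>set xs. in_ult M D x"
      proof
        fix x assume "x \<in> set xs"
        then obtain j where "j < length xs" "x = xs ! j" by (metis in_set_conv_nth)
        then show "in_ult M D x" using xs(1,2) local_ult unfolding lm_loc_def by auto
      qed
      moreover have "\<forall>j<arp P. eventually (\<lambda>i. Dst (M i) ((?us ! j) i) ((xs ! j) i) < \<delta>) D"
      proof (intro allI impI)
        fix j assume "j < arp P"
        then have "inf_close M D (?us ! j) (xs ! j)" using xs(2) len unfolding lm_loc_def by auto
        then show "eventually (\<lambda>i. Dst (M i) ((?us ! j) i) ((xs ! j) i) < \<delta>) D"
          using \<delta>(1) unfolding inf_close_eps by blast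
      qed
      ultimately show False using \<delta>(2)[rule_format, of xs] xs(1,3) len by auto
    qed
    then have "eval (Mloc M D) E (FRel P ts) = 1" using rhs by simp
    moreover have "eventually (\<lambda>i. eval (M i) (\<lambda>v. e v i) (FRel P ts) = 1) D"
      using not_ev[OF False[unfolded rel_seq_def]] by (rule eventually_mono) (simp add: useq_def o_def)
    ultimately show ?thesis by (simp add: tendsto_eventually)
  qed
next
  case (FConn c fs)
  let ?y = "map (eval (Mloc M D) E) fs"
  have cc: "cont_conn (length fs) c" using FConn.prems by simp
  have ih: "((\<lambda>i. eval (M i) (\<lambda>v. e v i) g) \<longlongrightarrow> eval (Mloc M D) E g) D" if "g \<in> set fs" for g
    using FConn that by auto
  show ?case unfolding tendsto_iff dist_real_def
  proof (intro allI impI)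
    fix \<epsilon> :: real assume "\<epsilon> > 0"
    with cc obtain \<delta> where \<delta>: "\<delta> > 0" "\<forall>x. length x = length fs \<and>
      (\<forall>j<length fs. \<bar>x ! j - ?y ! j\<bar> < \<delta>) \<longrightarrow> \<bar>c x - c ?y\<bar> < \<epsilon>"
      unfolding cont_conn_def by (meson length_map)
    have "\<forall>j\<in>{..<length fs}. eventually (\<lambda>i. \<bar>eval (M i) (\<lambda>v. e v i) (fs ! j) - ?y ! j\<bar> < \<delta>) D"
    proof
      fix j assume "j \<in> {..<length fs}"
      then have j: "j < length fs" by simp
      from ih[OF nth_mem[OF j]] \<delta>(1)
      have "eventually (\<lambda>i. \<bar>eval (M i) (\<lambda>v. e v i) (fs ! j) - eval (Mloc M D) E (fs ! j)\<bar> < \<delta>) D"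
        unfolding tendsto_iff dist_real_def by blast
      then show "eventually (\<lambda>i. \<bar>eval (M i) (\<lambda>v. e v i) (fs ! j) - ?y ! j\<bar> < \<delta>) D" using j by simp
    qed
    then have "eventually (\<lambda>i. \<forall>j\<in>{..<length fs}. \<bar>eval (M i) (\<lambda>v. e v i) (fs ! j) - ?y ! j\<bar> < \<delta>) D"
      by (intro eventually_ball_finite) auto
    then show "eventually (\<lambda>i. \<bar>eval (M i) (\<lambda>v. e v i) (FConn c fs) - eval (Mloc M D) E (FConn c fs)\<bar> < \<epsilon>) D"
    proof (rule eventually_mono)
      fix i assume "\<forall>j\<in>{..<length fs}. \<bar>eval (M i) (\<lambda>v. e v i) (fs ! j) - ?y ! j\<bar> < \<delta>"
      then have "\<forall>j<length fs. \<bar>map (eval (M i) (\<lambda>v. e v i)) fs ! j - ?y ! j\<bar> < \<delta>" by simp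
      then show "\<bar>eval (M i) (\<lambda>v. e v i) (FConn c fs) - eval (Mloc M D) E (FConn c fs)\<bar> < \<epsilon>"
        using \<delta>(2) by simp
    qed
  qed
next
  case (FSup m x g)
  have wg: "wf_fml arf arp g" using FSup.prems by simp
  obtain k where k: "\<forall>v\<in>fv (FSup m x g). in_S M D k (e v)"
    using local_set[OF finite_fv] FSup.prems by blast
  have evk: "eventually (\<lambda>i. \<forall>v\<in>fv (FSup m x g). e v i \<in> Srt (M i) k) D"
    by (rule in_S_ev[OF finite_fv k])
  obtain B where B: "eventually (\<lambda>i. \<forall>\<rho>. (\<forall>v\<in>fv g. \<rho> v \<in> Srt (M i) (max k m))
     \<longrightarrow> \<bar>eval (M i) \<rho> g\<bar> \<le> B) D" using fml_bnd[OF wg] by blast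
  let ?f = "\<lambda>i a. eval (M i) ((\<lambda>v. e v i)(x := a)) g"
  let ?G = "\<lambda>y. eval (Mloc M D) (E(x := lm_loc M D y)) g"
  have bnd: "eventually (\<lambda>i. \<forall>a\<in>Srt (M i) m. \<bar>?f i a\<bar> \<le> B) D"
    using evk B
  proof eventually_elim
    case (elim i)
    show ?case
    proof
      fix a assume a: "a \<in> Srt (M i) m"
      have "\<forall>v\<in>fv g. ((\<lambda>v. e v i)(x := a)) v \<in> Srt (M i) (max k m)"
      proof
        fix v assume v: "v \<in> fv g"
        show "((\<lambda>v. e v i)(x := a)) v \<in> Srt (M i) (max k m)"
        proof (cases "v = x")
          case True then show ?thesis using a Srt_mono[of m "max k m" i] by auto
        next
          case False then show ?thesis using elim(1) v Srt_mono[of k "max k m" i] by auto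
        qed
      qed
      then show "\<bar>?f i a\<bar> \<le> B" using elim(2) by blast
    qed
  qed
  have conv: "((\<lambda>i. ?f i (y i)) \<longlongrightarrow> ?G y) D" if y: "in_S M D m y" for y
  proof -
    have "\<forall>v\<in>fv g. is_local M D ((e(x := y)) v) \<and> (E(x := lm_loc M D y)) v = lm_loc M D ((e(x := y)) v)"
      using FSup.prems y unfolding is_local_def by auto
    from FSup.IH[OF wg this]
    have "((\<lambda>i. eval (M i) (\<lambda>v. (e(x := y)) v i) g) \<longlongrightarrow> ?G y) D" .
    moreover have "(\<lambda>v. (e(x := y)) v i) = (\<lambda>v. e v i)(x := y i)" for i by auto
    ultimately show ?thesis by simp
  qed
  have "((\<lambda>i. SUP a\<in>Srt (M i) m. ?f i a) \<longlongrightarrow> (SUP y\<in>{y. in_S M D m y}. ?G y)) D"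
    by (rule sup_step[OF conv bnd])
  moreover have "eval (Mloc M D) E (FSup m x g) = (SUP y\<in>{y. in_S M D m y}. ?G y)"
    by (simp add: Mloc_Srt image_image)
  ultimately show ?case by simp
next
  case (FInf m x g)
  have wg: "wf_fml arf arp g" using FInf.prems by simp
  obtain k where k: "\<forall>v\<in>fv (FInf m x g). in_S M D k (e v)"
    using local_set[OF finite_fv] FInf.prems by blast
  have evk: "eventually (\<lambda>i. \<forall>v\<in>fv (FInf m x g). e v i \<in> Srt (M i) k) D"
    by (rule in_S_ev[OF finite_fv k])
  obtain B where B: "eventually (\<lambda>i. \<forall>\<rho>. (\<forall>v\<in>fv g. \<rho> v \<in> Srt (M i) (max k m))
     \<longrightarrow> \<bar>eval (M i) \<rho> g\<bar> \<le> B) D" using fml_bnd[OF wg] by blast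
  let ?f = "\<lambda>i a. eval (M i) ((\<lambda>v. e v i)(x := a)) g"
  let ?G = "\<lambda>y. eval (Mloc M D) (E(x := lm_loc M D y)) g"
  have bnd: "eventually (\<lambda>i. \<forall>a\<in>Srt (M i) m. \<bar>?f i a\<bar> \<le> B) D"
    using evk B
  proof eventually_elim
    case (elim i)
    show ?case
    proof
      fix a assume a: "a \<in> Srt (M i) m"
      have "\<forall>v\<in>fv g. ((\<lambda>v. e v i)(x := a)) v \<in> Srt (M i) (max k m)"
      proof
        fix v assume v: "v \<in> fv g"
        show "((\<lambda>v. e v i)(x := a)) v \<in> Srt (M i) (max k m)"
        proof (cases "v = x")
          case True then show ?thesis using a Srt_mono[of m "max k m" i] by auto
        next
          case False then show ?thesis using elim(1) v Srt_mono[of k "max k m" i] by auto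
        qed
      qed
      then show "\<bar>?f i a\<bar> \<le> B" using elim(2) by blast
    qed
  qed
  have conv: "((\<lambda>i. ?f i (y i)) \<longlongrightarrow> ?G y) D" if y: "in_S M D m y" for y
  proof -
    have "\<forall>v\<in>fv g. is_local M D ((e(x := y)) v) \<and> (E(x := lm_loc M D y)) v = lm_loc M D ((e(x := y)) v)"
      using FInf.prems y unfolding is_local_def by auto
    from FInf.IH[OF wg this]
    have "((\<lambda>i. eval (M i) (\<lambda>v. (e(x := y)) v i) g) \<longlongrightarrow> ?G y) D" .
    moreover have "(\<lambda>v. (e(x := y)) v i) = (\<lambda>v. e v i)(x := y i)" for i by auto
    ultimately show ?thesis by simp
  qed
  have "((\<lambda>i. INF a\<in>Srt (M i) m. ?f i a) \<longlongrightarrow> (INF y\<in>{y. in_S M D m y}. ?G y)) D"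
    by (rule inf_step[OF conv bnd])
  moreover have "eval (Mloc M D) E (FInf m x g) = (INF y\<in>{y. in_S M D m y}. ?G y)"
    by (simp add: Mloc_Srt image_image)
  ultimately show ?case by simp
qed

end

theorem theorem2p10:
  fixes M :: "'i \<Rightarrow> ('f, 'p, 'a) mstruct" and D :: "'i filter"
    and arf :: "'f \<Rightarrow> nat" and arp :: "'p \<Rightarrow> nat"
    and \<sigma> :: "('f, 'p) fml" and a :: "'i \<Rightarrow> 'a list" and n m0 :: nat
  assumes "ultrafilter_filter D"
    and "emerging_metric arf arp M D"
    and "wf_fml arf arp \<sigma>"
    and "fv \<sigma> \<subseteq> {..<n}"
    and "\<forall>i. length (a i) = n"
    and "\<forall>i. set (a i) \<subseteq> Srt (M i) m0"
  shows "((\<lambda>i. eval (M i) (\<lambda>v. a i ! v) \<sigma>) \<longlongrightarrow>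
           eval (Mloc M D) (\<lambda>v. map (\<lambda>j. lm_loc M D (\<lambda>i. a i ! j)) [0..<n] ! v) \<sigma>) D"
proof -
  interpret em M D arf arp using assms(1,2) by unfold_locales
  let ?e = "\<lambda>v i. a i ! v"
  let ?E = "\<lambda>v. map (\<lambda>j. lm_loc M D (\<lambda>i. a i ! j)) [0..<n] ! v"
  have "\<forall>v\<in>fv \<sigma>. is_local M D (?e v) \<and> ?E v = lm_loc M D (?e v)"
  proof
    fix v assume "v \<in> fv \<sigma>"
    then have v: "v < n" using assms(4) by auto
    have "a i ! v \<in> Srt (M i) m0" for i
    proof -
      have "a i ! v \<in> set (a i)" using assms(5) v by simp
      then show ?thesis using assms(6) by blast
    qed
    then have "in_S M D m0 (?e v)" unfolding in_S_def by simp
    then have "is_local M D (?e v)" unfolding is_local_def by blast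
    moreover have "?E v = lm_loc M D (?e v)" using v by simp
    ultimately show "is_local M D (?e v) \<and> ?E v = lm_loc M D (?e v)" by blast
  qed
  from los[OF assms(3) this] show ?thesis .
qed

end
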